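(* Let $n,k,t$ be positive integers with $k<n$, $q$ a prime power, and $\mathcal{D}$ the Desarguesian $(t-1)$-spread of $\mathrm{PG}(nt-1,q)$. Let $\Omega$ be an $(nt-kt-2)$-dimensional subspace of $\mathrm{PG}(nt-1,q)$, let $\Gamma$ be a plane skew from $\Omega$, let $\bar{B}$ be a blocking set (with respect to lines) of the plane $\Gamma$, and let $K$ be the cone with vertex $\Omega$ and base $\bar{B}$. Then $\mathcal{B}(K)$ is a blocking set with respect to $(k-1)$-dimensional subspaces of $\mathrm{PG}(n-1,q^t)$.
   Context: Field reduction: each point of $\mathrm{PG}(n-1,q^t)$ corresponds to a $(t-1)$-dimensional subspace of $\mathrm{PG}(nt-1,q)$ (the $1$-dimensional $\mathbb{F}_{q^t}$-subspace viewed over $\mathbb{F}_q$); these form the Desarguesian $(t-1)$-spread $\mathcal{D}$. For $U\subseteq\mathrm{PG}(nt-1,q)$, $\mathcal{B}(U)$ is the set of elements of $\mathcal{D}$ meeting $U$, identified with points of $\mathrm{PG}(n-1,q^t)$. The cone with vertex $\Omega$ and base $\bar{B}$ (in a subspace skew from $\Omega$) is $\bigcup_{P\in\bar B}\langle P,\Omega\rangle$. A blocking set with respect to $j$-spaces is a point set meeting every $j$-dimensional subspace. *)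

theory Defs
  imports "HOL-Computational_Algebra.Primes"
begin

(* Model.  'a is the field F_{q^t}; K \<subseteq> 'a is the subfield F_q.
   Vectors of F_{q^t}^n are functions nat \<Rightarrow> 'a vanishing outside {0..<n}.
   Viewed over K this is the nt-dimensional F_q-space underlying PG(nt-1,q);
   viewed over UNIV (= F_{q^t}) it is the n-dimensional space underlying PG(n-1,q^t).
   A projective subspace of projective dimension m is a linear subspace of
   vector dimension m+1; a point is a 1-dimensional linear subspace. *)

definition vecs :: "nat \<Rightarrow> (nat \<Rightarrow> 'a::zero) set" where
  "vecs n = {v. \<forall>i\<ge>n. v i = 0}"

definition is_subfield :: "'a::field set \<Rightarrow> bool" where
  "is_subfield K \<longleftrightarrow> 0 \<in> K \<and> 1 \<in> K \<and>
     (\<forall>x\<in>K. \<forall>y\<in>K. x + y \<in> K \<and> x * y \<in> K) \<and>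
     (\<forall>x\<in>K. - x \<in> K \<and> inverse x \<in> K)"

definition prime_power :: "nat \<Rightarrow> bool" where
  "prime_power q \<longleftrightarrow> (\<exists>p m. prime p \<and> m > 0 \<and> q = p ^ m)"

definition Kspan :: "'a::field set \<Rightarrow> (nat \<Rightarrow> 'a) set \<Rightarrow> (nat \<Rightarrow> 'a) set" where
  "Kspan K S = {v. \<exists>F c. finite F \<and> F \<subseteq> S \<and> (\<forall>x\<in>F. c x \<in> K) \<and>
                        v = (\<lambda>i. \<Sum>x\<in>F. c x * x i)}"

definition Kindep :: "'a::field set \<Rightarrow> (nat \<Rightarrow> 'a) set \<Rightarrow> bool" where
  "Kindep K B \<longleftrightarrow> finite B \<and>
     (\<forall>c. (\<forall>x\<in>B. c x \<in> K) \<and> (\<lambda>i. \<Sum>x\<in>B. c x * x i) = (\<lambda>_. 0) \<longrightarrow> (\<forall>x\<in>B. c x = 0))"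

definition Ksub :: "'a::field set \<Rightarrow> nat \<Rightarrow> (nat \<Rightarrow> 'a) set \<Rightarrow> nat \<Rightarrow> bool" where
  "Ksub K n W d \<longleftrightarrow> (\<exists>B. B \<subseteq> vecs n \<and> Kindep K B \<and> card B = d \<and> Kspan K B = W)"

definition Kpoints :: "'a::field set \<Rightarrow> nat \<Rightarrow> (nat \<Rightarrow> 'a) set set" where
  "Kpoints K n = {P. Ksub K n P 1}"

(* point set of a projective space meeting every subspace of vector dimension d
   (i.e. a blocking set w.r.t. (d-1)-dimensional subspaces) contained in ambient W0 *)
definition blocking_in :: "'a::field set \<Rightarrow> nat \<Rightarrow> (nat \<Rightarrow> 'a) set \<Rightarrow> nat \<Rightarrow> (nat \<Rightarrow> 'a) set set \<Rightarrow> bool" where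
  "blocking_in K n W0 d B \<longleftrightarrow> B \<subseteq> {P \<in> Kpoints K n. P \<subseteq> W0} \<and>
     (\<forall>W. Ksub K n W d \<and> W \<subseteq> W0 \<longrightarrow> (\<exists>P\<in>B. P \<subseteq> W))"

definition cone :: "'a::field set \<Rightarrow> nat \<Rightarrow> (nat \<Rightarrow> 'a) set \<Rightarrow> (nat \<Rightarrow> 'a) set set \<Rightarrow> (nat \<Rightarrow> 'a) set set" where
  "cone K n Omega Bbar = {X \<in> Kpoints K n. \<exists>P\<in>Bbar. X \<subseteq> Kspan K (P \<union> Omega)}"

(* field reduction: elements of the Desarguesian spread (= points of PG(n-1,q^t),
   i.e. 1-dimensional F_{q^t}-subspaces) meeting a point set U of PG(nt-1,q) *)
definition BU :: "nat \<Rightarrow> (nat \<Rightarrow> 'a::field) set set \<Rightarrow> (nat \<Rightarrow> 'a) set set" where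
  "BU n U = {X \<in> Kpoints UNIV n. \<exists>P\<in>U. P \<subseteq> X}"

end

theory Submission imports Defs "HOL-Library.FuncSet" begin

definition vadd :: "(nat \<Rightarrow> 'a::field) \<Rightarrow> (nat \<Rightarrow> 'a) \<Rightarrow> (nat \<Rightarrow> 'a)" where
  "vadd v w = (\<lambda>i. v i + w i)"
definition smul :: "'a::field \<Rightarrow> (nat \<Rightarrow> 'a) \<Rightarrow> (nat \<Rightarrow> 'a)" where
  "smul c v = (\<lambda>i. c * v i)"
definition Kclosed :: "'a::field set \<Rightarrow> (nat \<Rightarrow> 'a) set \<Rightarrow> bool" where
  "Kclosed K S \<longleftrightarrow> (\<lambda>_. 0) \<in> S \<and> (\<forall>v\<in>S. \<forall>w\<in>S. vadd v w \<in> S) \<and> (\<forall>c\<in>K. \<forall>v\<in>S. smul c v \<in> S)"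
definition ssum :: "(nat \<Rightarrow> 'a::field) set \<Rightarrow> (nat \<Rightarrow> 'a) set \<Rightarrow> (nat \<Rightarrow> 'a) set" where
  "ssum A B = (\<lambda>(a,b). vadd a b) ` (A \<times> B)"

lemma sf: assumes "is_subfield K"
  shows "0 \<in> K" "1 \<in> K" "x \<in> K \<Longrightarrow> y \<in> K \<Longrightarrow> x + y \<in> K" "x \<in> K \<Longrightarrow> y \<in> K \<Longrightarrow> x * y \<in> K"
    "x \<in> K \<Longrightarrow> - x \<in> K" "x \<in> K \<Longrightarrow> inverse x \<in> K"
  using assms unfolding is_subfield_def by auto

lemma sf_UNIV: "is_subfield UNIV" unfolding is_subfield_def by auto

lemma sum_in_K: assumes "is_subfield K" "finite F" "\<forall>x\<in>F. f x \<in> K" shows "sum f F \<in> K"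
  using assms(2,3) by (induction F rule: finite_induct) (auto intro: sf[OF assms(1)])

lemma Kspan_zero: "(\<lambda>_. 0) \<in> Kspan K S"
  unfolding Kspan_def by (rule CollectI, rule exI[of _ "{}"]) auto

lemma Kspan_mem: assumes "1 \<in> K" "x \<in> S" shows "x \<in> Kspan K S"
  unfolding Kspan_def using assms by (intro CollectI exI[of _ "{x}"] exI[of _ "\<lambda>_. 1"]) auto

lemma Kspan_add: assumes "is_subfield K" "v \<in> Kspan K S" "w \<in> Kspan K S" shows "vadd v w \<in> Kspan K S"
proof -
  obtain F1 c1 where 1: "finite F1" "F1 \<subseteq> S" "\<forall>x\<in>F1. c1 x \<in> K" "v = (\<lambda>i. \<Sum>x\<in>F1. c1 x * x i)"
    using assms(2) unfolding Kspan_def by blast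
  obtain F2 c2 where 2: "finite F2" "F2 \<subseteq> S" "\<forall>x\<in>F2. c2 x \<in> K" "w = (\<lambda>i. \<Sum>x\<in>F2. c2 x * x i)"
    using assms(3) unfolding Kspan_def by blast
  define c where "c x = (if x \<in> F1 then c1 x else 0) + (if x \<in> F2 then c2 x else 0)" for x
  have cK: "\<forall>x\<in>F1 \<union> F2. c x \<in> K" using 1 2 sf[OF assms(1)] unfolding c_def by auto
  have "vadd v w = (\<lambda>i. \<Sum>x\<in>F1 \<union> F2. c x * x i)"
  proof
    fix i
    have a: "(\<Sum>x\<in>F1 \<union> F2. (if x \<in> F1 then c1 x * x i else 0)) = (\<Sum>x\<in>F1. c1 x * x i)"
      using sum.inter_restrict[of "F1 \<union> F2" "\<lambda>x. c1 x * x i" F1] 1 2 by (simp add: Int_absorb1)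
    have b: "(\<Sum>x\<in>F1 \<union> F2. (if x \<in> F2 then c2 x * x i else 0)) = (\<Sum>x\<in>F2. c2 x * x i)"
      using sum.inter_restrict[of "F1 \<union> F2" "\<lambda>x. c2 x * x i" F2] 1 2 by (simp add: Int_absorb1)
    have "(\<Sum>x\<in>F1 \<union> F2. c x * x i) = (\<Sum>x\<in>F1 \<union> F2. (if x \<in> F1 then c1 x * x i else 0) + (if x \<in> F2 then c2 x * x i else 0))"
      by (rule sum.cong) (auto simp: c_def distrib_right)
    also have "\<dots> = (\<Sum>x\<in>F1. c1 x * x i) + (\<Sum>x\<in>F2. c2 x * x i)"
      by (simp only: sum.distrib a b)
    finally show "vadd v w i = (\<Sum>x\<in>F1 \<union> F2. c x * x i)" using 1 2 by (simp add: vadd_def)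
  qed
  then show ?thesis unfolding Kspan_def using 1 2 cK by blast
qed

lemma Kspan_smul: assumes "is_subfield K" "a \<in> K" "v \<in> Kspan K S" shows "smul a v \<in> Kspan K S"
proof -
  obtain F c where 1: "finite F" "F \<subseteq> S" "\<forall>x\<in>F. c x \<in> K" "v = (\<lambda>i. \<Sum>x\<in>F. c x * x i)"
    using assms(3) unfolding Kspan_def by blast
  have e: "smul a v = (\<lambda>i. \<Sum>x\<in>F. (a * c x) * x i)"
  proof
    fix i
    have "smul a v i = a * (\<Sum>x\<in>F. c x * x i)" using 1(4) by (simp add: smul_def)
    also have "\<dots> = (\<Sum>x\<in>F. (a * c x) * x i)" by (simp add: sum_distrib_left mult.assoc)
    finally show "smul a v i = (\<Sum>x\<in>F. (a * c x) * x i)" .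
  qed
  have k: "\<forall>x\<in>F. a * c x \<in> K" using 1(3) assms(2) sf(4)[OF assms(1)] by blast
  show ?thesis unfolding Kspan_def
    by (rule CollectI, rule exI[of _ F], rule exI[of _ "\<lambda>x. a * c x"]) (use 1 k e in simp)
qed

lemma Kspan_closed: assumes "is_subfield K" shows "Kclosed K (Kspan K S)"
  unfolding Kclosed_def using Kspan_zero Kspan_add[OF assms] Kspan_smul[OF assms] by (intro conjI ballI) auto

lemma Kspan_sub: assumes "Kclosed K T" "B \<subseteq> T" shows "Kspan K B \<subseteq> T"
proof
  fix v assume "v \<in> Kspan K B"
  then obtain F c where 1: "finite F" "F \<subseteq> B" "\<forall>x\<in>F. c x \<in> K" "v = (\<lambda>i. \<Sum>x\<in>F. c x * x i)"
    unfolding Kspan_def by blast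
  have "(\<forall>x\<in>F. c x \<in> K) \<longrightarrow> (\<lambda>i. \<Sum>x\<in>F. c x * x i) \<in> T"
    using 1(1,2)
  proof (induction F rule: finite_subset_induct)
    case empty then show ?case using assms(1) unfolding Kclosed_def by simp
  next
    case (insert a F)
    have "(\<lambda>i. \<Sum>x\<in>insert a F. c x * x i) = vadd (smul (c a) a) (\<lambda>i. \<Sum>x\<in>F. c x * x i)"
      using insert by (simp add: vadd_def smul_def)
    then show ?case using insert assms unfolding Kclosed_def by auto
  qed
  then show "v \<in> T" using 1 by blast
qed

lemma vecs_closed: "Kclosed K (vecs n)"
  unfolding Kclosed_def vecs_def vadd_def smul_def by auto

lemma Ksub_props: assumes "Ksub K n W d" "is_subfield K"
  shows "Kclosed K W" "W \<subseteq> vecs n"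
  using assms Kspan_closed Kspan_sub[OF vecs_closed] unfolding Ksub_def by blast+

lemma Kclosed_mono: "Kclosed UNIV W \<Longrightarrow> Kclosed K W" unfolding Kclosed_def by auto

lemma Kclosed_Int: "Kclosed K A \<Longrightarrow> Kclosed K B \<Longrightarrow> Kclosed K (A \<inter> B)"
  unfolding Kclosed_def by auto

lemma Kclosed_ssum: assumes "Kclosed K A" "Kclosed K B" shows "Kclosed K (ssum A B)"
proof -
  have z: "(\<lambda>_. 0) \<in> ssum A B" using assms unfolding Kclosed_def ssum_def
    by (auto intro!: image_eqI[of _ _ "((\<lambda>_. 0), (\<lambda>_. 0))"] simp: vadd_def)
  have a: "vadd v w \<in> ssum A B" if vw: "v \<in> ssum A B" "w \<in> ssum A B" for v w
  proof -
    obtain a b a' b' where "a \<in> A" "b \<in> B" "a' \<in> A" "b' \<in> B" "v = vadd a b" "w = vadd a' b'"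
      using vw unfolding ssum_def by (auto simp: image_iff)
    moreover have "vadd (vadd a b) (vadd a' b') = vadd (vadd a a') (vadd b b')"
      by (auto simp: vadd_def algebra_simps)
    ultimately show ?thesis using assms unfolding Kclosed_def ssum_def
      by (auto intro!: image_eqI[of _ _ "(vadd a a', vadd b b')"])
  qed
  have s: "smul c v \<in> ssum A B" if cv: "c \<in> K" "v \<in> ssum A B" for c v
  proof -
    obtain a b where "a \<in> A" "b \<in> B" "v = vadd a b"
      using cv unfolding ssum_def by (auto simp: image_iff)
    moreover have "smul c (vadd a b) = vadd (smul c a) (smul c b)"
      by (auto simp: vadd_def smul_def algebra_simps)
    ultimately show ?thesis using assms cv unfolding Kclosed_def ssum_def
      by (auto intro!: image_eqI[of _ _ "(smul c a, smul c b)"])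
  qed
  show ?thesis unfolding Kclosed_def using z a s by blast
qed


lemma card_Ksub: assumes "finite K" "is_subfield K" "Ksub K n W d"
  shows "finite W \<and> card W = card K ^ d"
proof -
  obtain B where B: "B \<subseteq> vecs n" "Kindep K B" "card B = d" "Kspan K B = W"
    using assms(3) unfolding Ksub_def by blast
  have fB: "finite B" using B(2) unfolding Kindep_def by blast
  define phi where "phi c = (\<lambda>i. \<Sum>x\<in>B. c x * x i)" for c :: "(nat \<Rightarrow> 'a) \<Rightarrow> 'a"
  have inj: "inj_on phi (PiE B (\<lambda>_. K))"
  proof
    fix c c' assume c: "c \<in> PiE B (\<lambda>_. K)" and c': "c' \<in> PiE B (\<lambda>_. K)" and e: "phi c = phi c'"
    define e where "e x = c x + - c' x" for x
    have eK: "\<forall>x\<in>B. e x \<in> K" unfolding e_def by (metis PiE_mem c c' sf(3) sf(5) assms(2))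
    have "(\<lambda>i. \<Sum>x\<in>B. e x * x i) = (\<lambda>_. 0)"
    proof
      fix i
      have "(\<Sum>x\<in>B. e x * x i) = (\<Sum>x\<in>B. c x * x i) - (\<Sum>x\<in>B. c' x * x i)"
        by (simp add: e_def algebra_simps sum_subtractf)
      also have "\<dots> = 0" using fun_cong[OF e, of i] by (simp add: phi_def)
      finally show "(\<Sum>x\<in>B. e x * x i) = 0" .
    qed
    then have "\<forall>x\<in>B. e x = 0" using B(2) eK unfolding Kindep_def by blast
    then show "c = c'" using c c' by (intro PiE_ext[OF c c']) (auto simp: e_def)
  qed
  have img: "phi ` PiE B (\<lambda>_. K) = W"
  proof
    show "phi ` PiE B (\<lambda>_. K) \<subseteq> W"
      using B(4) fB unfolding phi_def Kspan_def by (auto simp: PiE_iff)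
  next
    show "W \<subseteq> phi ` PiE B (\<lambda>_. K)"
    proof
      fix v assume "v \<in> W"
      then obtain F c where 1: "finite F" "F \<subseteq> B" "\<forall>x\<in>F. c x \<in> K" "v = (\<lambda>i. \<Sum>x\<in>F. c x * x i)"
        using B(4) unfolding Kspan_def by blast
      define c' where "c' = restrict (\<lambda>x. if x \<in> F then c x else 0) B"
      have "c' \<in> PiE B (\<lambda>_. K)" using 1 sf[OF assms(2)] unfolding c'_def by auto
      moreover have "phi c' = v"
      proof
        fix i
        have "phi c' i = (\<Sum>x\<in>B. (if x \<in> F then c x * x i else 0))"
          unfolding phi_def c'_def by (rule sum.cong) auto
        also have "\<dots> = (\<Sum>x\<in>F. c x * x i)"
          using sum.inter_restrict[of B "\<lambda>x. c x * x i" F] fB 1(2) by (simp add: Int_absorb1)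
        finally show "phi c' i = v i" using 1 by simp
      qed
      ultimately show "v \<in> phi ` PiE B (\<lambda>_. K)" by blast
    qed
  qed
  have "card W = card (PiE B (\<lambda>_. K))" using card_image[OF inj] img by simp
  also have "\<dots> = card K ^ d" using card_PiE[OF fB, of "\<lambda>_. K"] B(3) by simp
  finally have "card W = card K ^ d" .
  moreover have "finite W" using img fB assms(1) by (metis finite_PiE finite_imageI)
  ultimately show ?thesis by simp
qed

lemma vecs_card: assumes "finite (UNIV :: 'a set)"
  shows "finite (vecs n :: (nat \<Rightarrow> 'a::field) set) \<and> card (vecs n :: (nat \<Rightarrow> 'a) set) \<le> card (UNIV :: 'a set) ^ n"
proof -
  let ?r = "\<lambda>v::nat \<Rightarrow> 'a. restrict v {..<n}"
  have inj: "inj_on ?r (vecs n)"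
  proof
    fix v w :: "nat \<Rightarrow> 'a" assume v: "v \<in> vecs n" and w: "w \<in> vecs n" and e: "?r v = ?r w"
    show "v = w"
    proof
      fix i
      show "v i = w i"
      proof (cases "i < n")
        case True
        then show ?thesis using fun_cong[OF e, of i] by simp
      next
        case False
        then show ?thesis using v w unfolding vecs_def by simp
      qed
    qed
  qed
  have sub: "?r ` (vecs n) \<subseteq> PiE {..<n} (\<lambda>_. UNIV)" by (intro image_subsetI iffD2[OF restrict_PiE_iff] ballI UNIV_I)
  have f: "finite (PiE {..<n} (\<lambda>_. (UNIV :: 'a set)))" using assms by (simp add: finite_PiE)
  have c: "card (PiE {..<n} (\<lambda>_. (UNIV :: 'a set))) = card (UNIV :: 'a set) ^ n" by (simp add: card_PiE)
  have fi: "finite (?r ` (vecs n))" using finite_subset[OF sub f] .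
  have "card (vecs n :: (nat \<Rightarrow> 'a) set) = card (?r ` (vecs n))" using card_image[OF inj] by simp
  also have "\<dots> \<le> card (PiE {..<n} (\<lambda>_. (UNIV :: 'a set)))" by (rule card_mono[OF f sub])
  finally have "card (vecs n :: (nat \<Rightarrow> 'a) set) \<le> card (UNIV :: 'a set) ^ n" using c by simp
  moreover have "finite (vecs n :: (nat \<Rightarrow> 'a) set)" using fi inj finite_image_iff by blast
  ultimately show ?thesis by blast
qed

definition fib :: "(nat \<Rightarrow> 'a::field) set \<Rightarrow> (nat \<Rightarrow> 'a) set \<Rightarrow> (nat \<Rightarrow> 'a) \<Rightarrow> ((nat \<Rightarrow> 'a) \<times> (nat \<Rightarrow> 'a)) set" where
  "fib A B s = {p \<in> A \<times> B. vadd (fst p) (snd p) = s}"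

lemma card_fib: assumes "is_subfield K" "Kclosed K A" "Kclosed K B" "a0 \<in> A" "b0 \<in> B"
  shows "card (fib A B (vadd a0 b0)) = card (A \<inter> B)"
proof -
  have m1: "- 1 \<in> K" using sf[OF assms(1)] by blast
  let ?f = "\<lambda>p. vadd (fst p) (smul (-1) a0)"
  let ?g = "\<lambda>i. (vadd a0 i, vadd b0 (smul (-1) i))"
  have "bij_betw ?f (fib A B (vadd a0 b0)) (A \<inter> B)"
  proof (rule bij_betw_byWitness[where f'="?g"])
    show "\<forall>a\<in>fib A B (vadd a0 b0). ?g (?f a) = a"
    proof
      fix p assume p: "p \<in> fib A B (vadd a0 b0)"
      then have e: "\<And>i. fst p i + snd p i = a0 i + b0 i" unfolding fib_def vadd_def by (auto dest: fun_cong)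
      have "vadd b0 (smul (- 1) (vadd (fst p) (smul (- 1) a0))) = snd p"
      proof
        fix i
        have "snd p i = a0 i + b0 i - fst p i" using e[of i] by (metis add_diff_cancel_left')
        then show "vadd b0 (smul (- 1) (vadd (fst p) (smul (- 1) a0))) i = snd p i"
          by (simp add: vadd_def smul_def algebra_simps)
      qed
      then show "?g (?f p) = p" by (auto simp: vadd_def smul_def intro!: prod_eqI)
    qed
    show "\<forall>a'\<in>A \<inter> B. ?f (?g a') = a'" by (auto simp: vadd_def smul_def)
    show "?f ` fib A B (vadd a0 b0) \<subseteq> A \<inter> B"
    proof
      fix x assume "x \<in> ?f ` fib A B (vadd a0 b0)"
      then obtain p where p: "p \<in> fib A B (vadd a0 b0)" "x = ?f p" by blast
      then have e: "\<And>i. fst p i + snd p i = a0 i + b0 i" unfolding fib_def vadd_def by (auto dest: fun_cong)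
      have "?f p \<in> A" using p assms m1 unfolding fib_def Kclosed_def by auto
      moreover have "?f p = vadd b0 (smul (-1) (snd p))"
      proof
        fix i
        have "snd p i = a0 i + b0 i - fst p i" using e[of i] by (metis add_diff_cancel_left')
        then show "?f p i = vadd b0 (smul (-1) (snd p)) i"
          by (simp add: vadd_def smul_def algebra_simps)
      qed
      moreover have "vadd b0 (smul (-1) (snd p)) \<in> B" using p assms m1 unfolding fib_def Kclosed_def by auto
      ultimately show "x \<in> A \<inter> B" using p by simp
    qed
    show "?g ` (A \<inter> B) \<subseteq> fib A B (vadd a0 b0)"
    proof
      fix x assume "x \<in> ?g ` (A \<inter> B)"
      then obtain i where i: "i \<in> A \<inter> B" "x = ?g i" by blast
      have "vadd a0 i \<in> A" "vadd b0 (smul (-1) i) \<in> B" using i assms m1 unfolding Kclosed_def by auto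
      moreover have "vadd (vadd a0 i) (vadd b0 (smul (-1) i)) = vadd a0 b0"
        by (auto simp: vadd_def smul_def)
      ultimately show "x \<in> fib A B (vadd a0 b0)" using i unfolding fib_def by auto
    qed
  qed
  then show ?thesis by (rule bij_betw_same_card)
qed

lemma card_ssum: assumes "is_subfield K" "Kclosed K A" "Kclosed K B" "finite A" "finite B"
  shows "card A * card B = card (ssum A B) * card (A \<inter> B)"
proof -
  have U: "A \<times> B = (\<Union>s\<in>ssum A B. fib A B s)" unfolding ssum_def fib_def by auto
  have fS: "finite (ssum A B)" using assms unfolding ssum_def by auto
  have "card (A \<times> B) = (\<Sum>s\<in>ssum A B. card (fib A B s))"
    unfolding U
    by (rule card_UN_disjoint[OF fS]) (use assms in \<open>auto simp: fib_def intro: finite_subset[of _ "A \<times> B"]\<close>)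
  also have "\<dots> = (\<Sum>s\<in>ssum A B. card (A \<inter> B))"
    by (rule sum.cong) (auto simp: ssum_def intro!: card_fib[OF assms(1-3)])
  finally show ?thesis by (simp add: card_cartesian_product)
qed


lemma span1: assumes "0 \<in> K" shows "Kspan K {a} \<subseteq> (\<lambda>c. smul c a) ` K"
proof
  fix v assume "v \<in> Kspan K {a}"
  then obtain F c where 1: "finite F" "F \<subseteq> {a}" "\<forall>x\<in>F. c x \<in> K" "v = (\<lambda>i. \<Sum>x\<in>F. c x * x i)"
    unfolding Kspan_def by blast
  have "F = {} \<or> F = {a}" using 1(2) by blast
  then show "v \<in> (\<lambda>c. smul c a) ` K"
  proof
    assume "F = {}" then show ?thesis using 1 assms by (auto simp: smul_def intro!: image_eqI[of _ _ 0])
  next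
    assume "F = {a}" then show ?thesis using 1 by (auto simp: smul_def)
  qed
qed

lemma mk_point: assumes "w \<in> vecs n" "w \<noteq> (\<lambda>_. 0)" shows "Kspan K {w} \<in> Kpoints K n"
proof -
  obtain j where j: "w j \<noteq> 0" using assms(2) by auto
  have "Kindep K {w}" unfolding Kindep_def
  proof (intro conjI allI impI)
    fix c assume "(\<forall>x\<in>{w}. c x \<in> K) \<and> (\<lambda>i. \<Sum>x\<in>{w}. c x * x i) = (\<lambda>_. 0)"
    then have "c w * w j = 0" by (auto dest: fun_cong[of _ _ j])
    then show "\<forall>x\<in>{w}. c x = 0" using j by simp
  qed simp
  then show ?thesis unfolding Kpoints_def Ksub_def using assms(1) by (intro CollectI exI[of _ "{w}"]) auto
qed

lemma point_nz: assumes "P \<in> Kpoints K n" "is_subfield K"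
  shows "\<exists>p. p \<in> P \<and> p \<noteq> (\<lambda>_. 0)"
proof -
  obtain B where B: "B \<subseteq> vecs n" "Kindep K B" "card B = 1" "Kspan K B = P"
    using assms(1) unfolding Kpoints_def Ksub_def by blast
  obtain p where p: "B = {p}" using B(3) card_1_singletonE by blast
  have "p \<noteq> (\<lambda>_. 0)"
  proof
    assume p0: "p = (\<lambda>_. 0)"
    have H: "\<And>c. (\<forall>x\<in>B. c x \<in> K) \<Longrightarrow> (\<lambda>i. \<Sum>x\<in>B. c x * x i) = (\<lambda>_. 0) \<Longrightarrow> \<forall>x\<in>B. c x = 0"
      using B(2) unfolding Kindep_def by blast
    have "\<forall>x\<in>B. (\<lambda>_. (1::'a)) x = 0"
      by (rule H) (use p p0 sf[OF assms(2)] in auto)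
    then show False using p by simp
  qed
  moreover have "p \<in> P" using B(4) p Kspan_mem sf[OF assms(2)] by blast
  ultimately show ?thesis by blast
qed

lemma exists_line: assumes "is_subfield K" "finite K" "Kclosed K S" "S \<subseteq> vecs n" "finite S" "card S > card K"
  shows "\<exists>L. Ksub K n L 2 \<and> L \<subseteq> S"
proof -
  have K0: "K \<noteq> {}" using sf(1)[OF assms(1)] by blast
  have "card K \<ge> 1" using K0 assms(2) by (simp add: Suc_le_eq card_gt_0_iff)
  have "\<not> S \<subseteq> {(\<lambda>_. 0)}"
  proof
    assume S0: "S \<subseteq> {(\<lambda>_. 0)}"
    have "card S \<le> card {(\<lambda>_. 0)}" using card_mono[OF _ S0] by simp
    then show False using assms(6) \<open>card K \<ge> 1\<close> by simp
  qed
  then obtain a where a: "a \<in> S" "a \<noteq> (\<lambda>_. 0)" by blast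
  have s1: "Kspan K {a} \<subseteq> (\<lambda>c. smul c a) ` K" using span1 sf[OF assms(1)] by blast
  have fs: "finite (Kspan K {a})" using finite_subset[OF s1] assms(2) by blast
  have "card (Kspan K {a}) \<le> card ((\<lambda>c. smul c a) ` K)" by (rule card_mono[OF finite_imageI[OF assms(2)] s1])
  also have "\<dots> \<le> card K" by (rule card_image_le[OF assms(2)])
  finally have cs: "card (Kspan K {a}) \<le> card K" .
  have "\<not> S \<subseteq> Kspan K {a}"
  proof
    assume "S \<subseteq> Kspan K {a}"
    then have "card S \<le> card (Kspan K {a})" using card_mono[OF fs] by blast
    then show False using cs assms(6) by simp
  qed
  then obtain b where b: "b \<in> S" "b \<notin> Kspan K {a}" by blast
  have aa: "a \<in> Kspan K {a}" by (rule Kspan_mem[OF sf(2)[OF assms(1)]]) simp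
  have ab: "a \<noteq> b" using aa b(2) by metis
  have ind: "Kindep K {a, b}" unfolding Kindep_def
  proof (intro conjI allI impI)
    fix c assume c: "(\<forall>x\<in>{a, b}. c x \<in> K) \<and> (\<lambda>i. \<Sum>x\<in>{a, b}. c x * x i) = (\<lambda>_. 0)"
    have e: "c a * a i + c b * b i = 0" for i
    proof -
      have "(\<lambda>i. \<Sum>x\<in>{a, b}. c x * x i) i = (\<lambda>_. 0) i" using fun_cong[OF conjunct2[OF c], of i] .
      then show ?thesis using ab by simp
    qed
    have cb: "c b = 0"
    proof (rule ccontr)
      assume nz: "c b \<noteq> 0"
      have beq: "b = smul (- (c a * inverse (c b))) a"
      proof
        fix i
        have h: "c b * b i = - (c a * a i)" using e[of i] by (simp add: add_eq_0_iff)
        have "b i = inverse (c b) * (c b * b i)" using nz by simp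
        also have "\<dots> = - (c a * inverse (c b)) * a i" unfolding h by (simp add: algebra_simps)
        finally show "b i = smul (- (c a * inverse (c b))) a i" by (simp add: smul_def)
      qed
      have "c a \<in> K" "c b \<in> K" using c by auto
      then have sk: "- (c a * inverse (c b)) \<in> K" using sf(4-6)[OF assms(1)] by blast
      have ak: "a \<in> Kspan K {a}" using Kspan_mem[of K a "{a}"] sf[OF assms(1)] by blast
      have "b \<in> Kspan K {a}"
        by (rule ssubst[OF beq, of "\<lambda>z. z \<in> Kspan K {a}"]) (rule Kspan_smul[OF assms(1) sk ak])
      then show False using b by blast
    qed
    obtain j where j: "a j \<noteq> 0" using a(2) by auto
    have "c a = 0" using e[of j] cb j by simp
    then show "\<forall>x\<in>{a, b}. c x = 0" using cb by blast
  qed simp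
  have sv: "{a, b} \<subseteq> vecs n" using a(1) b(1) assms(4) by blast
  have c2: "card {a, b} = 2" using ab by simp
  have "Ksub K n (Kspan K {a, b}) 2" unfolding Ksub_def
    by (rule exI[of _ "{a,b}"]) (intro conjI sv ind c2 refl)
  moreover have "Kspan K {a, b} \<subseteq> S" by (rule Kspan_sub[OF assms(3)]) (use a(1) b(1) in blast)
  ultimately show ?thesis by blast
qed


lemma ssum_vecs: "A \<subseteq> vecs n \<Longrightarrow> B \<subseteq> vecs n \<Longrightarrow> ssum A B \<subseteq> vecs n"
  unfolding ssum_def vecs_def vadd_def by (auto simp: subset_iff)

theorem lemma4p1:
  fixes K :: "'a::{field,finite} set"
    and n k t q :: nat
    and Omega Gamma :: "(nat \<Rightarrow> 'a) set"
    and Bbar :: "(nat \<Rightarrow> 'a) set set"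
  assumes "0 < n" "0 < k" "0 < t" "k < n"
    and "prime_power q"
    and "is_subfield K" "card K = q" "card (UNIV :: 'a set) = q ^ t"
    and "Ksub K n Omega (n*t - k*t - 1)"
    and "Ksub K n Gamma 3"
    and "Omega \<inter> Gamma = {\<lambda>_. 0}"
    and "blocking_in K n Gamma 2 Bbar"
  shows "blocking_in UNIV n UNIV k (BU n (cone K n Omega Bbar))"
proof -
  note sK = assms(6)
  have fK: "finite K" by simp
  obtain p0 m where pm: "prime p0" "m > 0" "q = p0 ^ m" using assms(5) unfolding prime_power_def by blast
  have q2: "q \<ge> 2"
  proof -
    have "p0 \<ge> 2" using pm(1) prime_ge_2_nat by blast
    moreover have "p0 ^ 1 \<le> p0 ^ m" using pm(2) \<open>p0 \<ge> 2\<close> by (intro power_increasing) auto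
    ultimately show ?thesis using pm(3) by simp
  qed
  have OC: "Kclosed K Omega" "Omega \<subseteq> vecs n" using Ksub_props[OF assms(9) sK] by auto
  have Ocard: "finite Omega" "card Omega = q ^ (n*t - k*t - 1)" using card_Ksub[OF fK sK assms(9)] assms(7) by auto
  have GC: "Kclosed K Gamma" "Gamma \<subseteq> vecs n" using Ksub_props[OF assms(10) sK] by auto
  have Gcard: "finite Gamma" "card Gamma = q ^ 3" using card_Ksub[OF fK sK assms(10)] assms(7) by auto
  have blk: "\<And>L. Ksub K n L 2 \<Longrightarrow> L \<subseteq> Gamma \<Longrightarrow> \<exists>P\<in>Bbar. P \<subseteq> L"
    using assms(12) unfolding blocking_in_def by blast
  have Bpts: "\<And>P. P \<in> Bbar \<Longrightarrow> P \<in> Kpoints K n \<and> P \<subseteq> Gamma"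
    using assms(12) unfolding blocking_in_def by blast
  have key: "\<exists>P\<in>BU n (cone K n Omega Bbar). P \<subseteq> W" if W: "Ksub UNIV n W k" for W
  proof -
    have WC: "Kclosed UNIV W" "W \<subseteq> vecs n" using Ksub_props[OF W sf_UNIV] by auto
    have WCK: "Kclosed K W" using WC(1) Kclosed_mono by blast
    have Wcard: "finite W" "card W = (q ^ t) ^ k" using card_Ksub[OF _ sf_UNIV W] assms(8) by auto
    have suff: "\<exists>P\<in>BU n (cone K n Omega Bbar). P \<subseteq> W"
      if w: "w \<in> W" "w \<noteq> (\<lambda>_. 0)" "P0 \<in> Bbar" "w \<in> Kspan K (P0 \<union> Omega)" for w P0
    proof -
      have wv: "w \<in> vecs n" using w WC by blast
      have X: "Kspan K {w} \<in> Kpoints K n" using mk_point[OF wv w(2)] .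
      have "Kspan K {w} \<subseteq> Kspan K (P0 \<union> Omega)"
        using Kspan_sub[OF Kspan_closed[OF sK]] w(4) by blast
      then have Xc: "Kspan K {w} \<in> cone K n Omega Bbar" unfolding cone_def using X w(3) by blast
      have Y: "Kspan UNIV {w} \<in> Kpoints UNIV n" using mk_point[OF wv w(2)] .
      have "Kspan K {w} \<subseteq> Kspan UNIV {w}"
        using Kspan_sub[OF Kclosed_mono[OF Kspan_closed[OF sf_UNIV]]] Kspan_mem[of UNIV w "{w}"] by blast
      then have "Kspan UNIV {w} \<in> BU n (cone K n Omega Bbar)" unfolding BU_def using Y Xc by blast
      moreover have "Kspan UNIV {w} \<subseteq> W" using Kspan_sub[OF WC(1)] w(1) by blast
      ultimately show ?thesis by blast
    qed
    show ?thesis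
    proof (cases "\<exists>w\<in>W \<inter> Omega. w \<noteq> (\<lambda>_. 0)")
      case True
      then obtain w where w: "w \<in> W" "w \<in> Omega" "w \<noteq> (\<lambda>_. 0)" by blast
      have "q ^ 1 < q ^ 3" using q2 by (intro power_strict_increasing) auto
      then have "q < q ^ 3" by simp
      then obtain L where L: "Ksub K n L 2" "L \<subseteq> Gamma"
        using exists_line[OF sK fK GC(1) GC(2) Gcard(1)] Gcard(2) assms(7) by auto
      obtain P0 where "P0 \<in> Bbar" using blk[OF L] by blast
      moreover have "w \<in> Kspan K (P0 \<union> Omega)" using Kspan_mem sf[OF sK] w(2) by blast
      ultimately show ?thesis using suff w by blast
    next
      case False
      have WO: "W \<inter> Omega = {(\<lambda>_. 0)}" using False WC(1) OC(1) unfolding Kclosed_def by auto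
      define U where "U = ssum W Omega"
      have UC: "Kclosed K U" unfolding U_def by (rule Kclosed_ssum[OF WCK OC(1)])
      have Uv: "U \<subseteq> vecs n" unfolding U_def by (rule ssum_vecs[OF WC(2) OC(2)])
      have fU: "finite U" using Wcard(1) Ocard(1) unfolding U_def ssum_def by auto
      have "card W * card Omega = card U * card (W \<inter> Omega)"
        unfolding U_def by (rule card_ssum[OF sK WCK OC(1) Wcard(1) Ocard(1)])
      then have cU: "card U = (q ^ t) ^ k * q ^ (n*t - k*t - 1)" using WO Wcard Ocard by simp
      have "k * t < n * t" using assms(3,4) by simp
      then have ex0: "k * t + (n*t - k*t - 1) = n * t - 1" by linarith
      have ex: "t * k + (n*t - k*t - 1) = n * t - 1" using ex0 by (metis mult.commute)
      have cU2: "card U = q ^ (n*t - 1)" using cU ex by (simp add: power_mult[symmetric] power_add[symmetric])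
      define I where "I = Gamma \<inter> U"
      have IC: "Kclosed K I" unfolding I_def by (rule Kclosed_Int[OF GC(1) UC])
      have Iv: "I \<subseteq> vecs n" using GC(2) unfolding I_def by blast
      have fI: "finite I" using Gcard(1) unfolding I_def by blast
      have S: "ssum Gamma U \<subseteq> vecs n" by (rule ssum_vecs[OF GC(2) Uv])
      have vc: "finite (vecs n :: (nat \<Rightarrow> 'a) set)" "card (vecs n :: (nat \<Rightarrow> 'a) set) \<le> (q ^ t) ^ n"
        using vecs_card[of n, where 'a='a] assms(8) by auto
      have "card (ssum Gamma U) \<le> card (vecs n :: (nat \<Rightarrow> 'a) set)" by (rule card_mono[OF vc(1) S])
      also have "\<dots> \<le> (q ^ t) ^ n" by (rule vc(2))
      also have "\<dots> = q ^ (n * t)" by (simp add: power_mult[symmetric] mult.commute)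
      finally have cv: "card (ssum Gamma U) \<le> q ^ (n * t)" .
      have eq: "card Gamma * card U = card (ssum Gamma U) * card I"
        unfolding I_def by (rule card_ssum[OF sK GC(1) UC Gcard(1) fU])
      have "n * t \<ge> 1" using assms(1,3) by simp
      then have "3 + (n*t - 1) = n*t + 2" by simp
      then have pe: "q ^ 3 * q ^ (n*t - 1) = q ^ (n*t) * q ^ 2"
        by (metis power_add)
      have "q ^ (n*t) * q ^ 2 = card (ssum Gamma U) * card I" using pe eq Gcard(2) cU2 by simp
      also have "\<dots> \<le> q ^ (n*t) * card I" by (rule mult_le_mono1[OF cv])
      finally have "q ^ (n*t) * q ^ 2 \<le> q ^ (n*t) * card I" .
      then have "q ^ 2 \<le> card I" using q2 by simp
      moreover have "q < q ^ 2" using q2 by (simp add: power2_eq_square)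
      ultimately have "card K < card I" using assms(7) by simp
      then obtain L where L: "Ksub K n L 2" "L \<subseteq> I"
        using exists_line[OF sK fK IC Iv fI] by blast
      then obtain P0 where P0: "P0 \<in> Bbar" "P0 \<subseteq> L" using blk[of L] unfolding I_def by blast
      obtain p where p: "p \<in> P0" "p \<noteq> (\<lambda>_. 0)" using point_nz[OF _ sK] Bpts[OF P0(1)] by blast
      have pU: "p \<in> U" "p \<in> Gamma" using p P0 L unfolding I_def by auto
      then obtain w ov where wo: "w \<in> W" "ov \<in> Omega" "p = vadd w ov" unfolding U_def ssum_def by (auto simp: image_iff)
      have wnz: "w \<noteq> (\<lambda>_. 0)"
      proof
        assume "w = (\<lambda>_. 0)"
        then have "p = ov" using wo by (simp add: vadd_def)
        then have "p \<in> Omega \<inter> Gamma" using wo pU by blast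
        then show False using assms(11) p(2) by blast
      qed
      have weq: "w = vadd p (smul (-1) ov)" using wo by (auto simp: vadd_def smul_def)
      have pS: "p \<in> Kspan K (P0 \<union> Omega)" by (rule Kspan_mem[OF sf(2)[OF sK]]) (use p(1) in blast)
      have oS: "ov \<in> Kspan K (P0 \<union> Omega)" by (rule Kspan_mem[OF sf(2)[OF sK]]) (use wo(2) in blast)
      have m1: "- 1 \<in> K" using sf(2,5)[OF sK] by blast
      have "vadd p (smul (-1) ov) \<in> Kspan K (P0 \<union> Omega)"
        by (rule Kspan_add[OF sK pS Kspan_smul[OF sK m1 oS]])
      then have "w \<in> Kspan K (P0 \<union> Omega)" using weq by simp
      then show ?thesis using suff wo(1) wnz P0(1) by blast
    qed
  qed
  show ?thesis unfolding blocking_in_def using key by (auto simp: BU_def)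
qed

end
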